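(* Let $\Sigma$ be a finite set of denial constraints, $D$ a nonempty instance, and $0<\epsilon<1$ such that $\epsilon|D|$ is an integer. Let $D_k\subseteq D$ with $|D_k|=\epsilon|D|$, and $D'=D\setminus D_k$. Then $$\mathit{inc\text{-}deg}^{c,g_3}(D',\Sigma)\le \frac{1}{1-\epsilon}\,\mathit{inc\text{-}deg}^{c,g_3}(D,\Sigma) \quad\text{and}\quad \mathit{inc\text{-}deg}^{c,g_3}(D,\Sigma)\le \frac{1}{1-\epsilon}\,\mathit{inc\text{-}deg}^{c,g_3}(D',\Sigma)+\epsilon .$$ Moreover, if no tuple of $D_k$ participates in a violation of $\Sigma$ in $D$ (i.e. no tuple of $D_k$ belongs to a subset-minimal set $S\subseteq D$ of tuples jointly violating some constraint of $\Sigma$), then $\mathit{inc\text{-}deg}^{c,g_3}(D,\Sigma)\le \frac{1}{1-\epsilon}\,\mathit{inc\text{-}deg}^{c,g_3}(D',\Sigma)$.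
   Context: A database instance is a finite set of ground atoms (tuples). A denial constraint (DC) is a sentence $\neg\exists\bar x\,(P_1(\bar x_1)\wedge\dots\wedge P_m(\bar x_m)\wedge\varphi)$ with the $P_i$ schema predicates and $\varphi$ a possibly empty conjunction of built-in comparisons; a set $S$ of tuples jointly violates it if $S$ satisfies the existential body. A subset-repair (S-repair) of $D$ wrt. $\Sigma$ is a $\subseteq$-maximal subset $D'\subseteq D$ that satisfies $\Sigma$; a cardinality-repair (C-repair) is an S-repair of maximum cardinality; $\mathit{Crep}(D,\Sigma)$ is the set of C-repairs. For nonempty $D$, $$\mathit{inc\text{-}deg}^{c,g_3}(D,\Sigma)=\frac{|D|-\max\{|D'| : D'\in \mathit{Crep}(D,\Sigma)\}}{|D|}.$$ *)

theory Defs
  imports Main "HOL.Real"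
begin

text \<open>Ground atoms (tuples): a predicate name together with a tuple of values.\<close>
type_synonym 'v atom = "string \<times> 'v list"

datatype 'v dterm = Var nat | Const 'v

datatype cmp = CEq | CNeq | CLt | CLe | CGt | CGe

fun eval_cmp :: "cmp \<Rightarrow> 'v::linorder \<Rightarrow> 'v \<Rightarrow> bool" where
  "eval_cmp CEq a b = (a = b)"
| "eval_cmp CNeq a b = (a \<noteq> b)"
| "eval_cmp CLt a b = (a < b)"
| "eval_cmp CLe a b = (a \<le> b)"
| "eval_cmp CGt a b = (a > b)"
| "eval_cmp CGe a b = (a \<ge> b)"

fun eval_term :: "(nat \<Rightarrow> 'v) \<Rightarrow> 'v dterm \<Rightarrow> 'v" where
  "eval_term \<nu> (Var i) = \<nu> i"
| "eval_term \<nu> (Const c) = c"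

text \<open>A denial constraint  not exists x (P1(x1) and ... and Pm(xm) and phi):
  the list of relational atoms P_i(x_i) and the conjunction phi of comparisons.\<close>
datatype 'v dc = DC (dc_atoms: "(string \<times> 'v dterm list) list")
                    (dc_comps: "('v dterm \<times> cmp \<times> 'v dterm) list")

definition wf_dc :: "'v dc \<Rightarrow> bool" where
  "wf_dc \<kappa> \<longleftrightarrow> dc_atoms \<kappa> \<noteq> []"

definition violates :: "'v::linorder atom set \<Rightarrow> 'v dc \<Rightarrow> bool" where
  "violates S \<kappa> \<longleftrightarrow> (\<exists>\<nu>.
      (\<forall>(P, ts) \<in> set (dc_atoms \<kappa>). (P, map (eval_term \<nu>) ts) \<in> S) \<and>
      (\<forall>(a, c, b) \<in> set (dc_comps \<kappa>). eval_cmp c (eval_term \<nu> a) (eval_term \<nu> b)))"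

definition satisfies :: "'v::linorder atom set \<Rightarrow> 'v dc set \<Rightarrow> bool" where
  "satisfies D \<Sigma> \<longleftrightarrow> (\<forall>\<kappa>\<in>\<Sigma>. \<not> violates D \<kappa>)"

definition is_srepair :: "'v::linorder atom set \<Rightarrow> 'v dc set \<Rightarrow> 'v atom set \<Rightarrow> bool" where
  "is_srepair D \<Sigma> D' \<longleftrightarrow> D' \<subseteq> D \<and> satisfies D' \<Sigma> \<and>
     (\<forall>D''. D' \<subset> D'' \<and> D'' \<subseteq> D \<longrightarrow> \<not> satisfies D'' \<Sigma>)"

definition is_crepair :: "'v::linorder atom set \<Rightarrow> 'v dc set \<Rightarrow> 'v atom set \<Rightarrow> bool" where
  "is_crepair D \<Sigma> D' \<longleftrightarrow> is_srepair D \<Sigma> D' \<and>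
     (\<forall>D''. is_srepair D \<Sigma> D'' \<longrightarrow> card D'' \<le> card D')"

definition Crep :: "'v::linorder atom set \<Rightarrow> 'v dc set \<Rightarrow> 'v atom set set" where
  "Crep D \<Sigma> = {D'. is_crepair D \<Sigma> D'}"

definition inc_deg_c_g3 :: "'v::linorder atom set \<Rightarrow> 'v dc set \<Rightarrow> real" where
  "inc_deg_c_g3 D \<Sigma> =
     (real (card D) - real (Max (card ` Crep D \<Sigma>))) / real (card D)"

definition participates :: "'v::linorder atom set \<Rightarrow> 'v dc set \<Rightarrow> 'v atom \<Rightarrow> bool" where
  "participates D \<Sigma> t \<longleftrightarrow> (\<exists>\<kappa>\<in>\<Sigma>. \<exists>S. S \<subseteq> D \<and> t \<in> S \<and> violates S \<kappa> \<and>
       (\<forall>S'. S' \<subset> S \<longrightarrow> \<not> violates S' \<kappa>))"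

end

theory Submission
  imports Defs
begin

lemma violates_mono: "violates S \<kappa> \<Longrightarrow> S \<subseteq> T \<Longrightarrow> violates T \<kappa>"
  unfolding violates_def by blast

lemma satisfies_mono: "satisfies T \<Sigma> \<Longrightarrow> S \<subseteq> T \<Longrightarrow> satisfies S \<Sigma>"
  unfolding satisfies_def using violates_mono by blast

lemma satisfies_empty: "\<forall>\<kappa>\<in>\<Sigma>. wf_dc \<kappa> \<Longrightarrow> satisfies {} \<Sigma>"
  unfolding satisfies_def violates_def wf_dc_def
  by (metis (no_types, lifting) case_prodE empty_iff list.set_sel(1))

lemma crep_max:
  assumes "finite D" "\<forall>\<kappa>\<in>\<Sigma>. wf_dc \<kappa>"
  obtains R where "R \<subseteq> D" "satisfies R \<Sigma>" "Max (card ` Crep D \<Sigma>) = card R"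
           "\<forall>X. X \<subseteq> D \<and> satisfies X \<Sigma> \<longrightarrow> card X \<le> card R"
proof -
  define A where "A = {X. X \<subseteq> D \<and> satisfies X \<Sigma>}"
  have fA: "finite A" unfolding A_def using assms(1) by auto
  have neA: "{} \<in> A" unfolding A_def using satisfies_empty[OF assms(2)] by auto
  have "Max (card ` A) \<in> card ` A" using fA neA by (intro Max_in) auto
  then obtain R where R: "R \<in> A" "card R = Max (card ` A)" by auto
  have Rmax: "\<forall>X\<in>A. card X \<le> card R" using R(2) fA by simp
  have sR: "is_srepair D \<Sigma> R"
    unfolding is_srepair_def
  proof (intro conjI allI impI)
    show "R \<subseteq> D" "satisfies R \<Sigma>" using R(1) unfolding A_def by auto
  next
    fix D'' assume h: "R \<subset> D'' \<and> D'' \<subseteq> D"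
    hence "card R < card D''" using assms(1) by (meson psubset_card_mono rev_finite_subset)
    show "\<not> satisfies D'' \<Sigma>"
    proof
      assume "satisfies D'' \<Sigma>"
      hence "D'' \<in> A" using h unfolding A_def by blast
      hence "card D'' \<le> card R" using Rmax by blast
      thus False using \<open>card R < card D''\<close> by simp
    qed
  qed
  have cR: "is_crepair D \<Sigma> R"
    unfolding is_crepair_def using sR Rmax unfolding A_def is_srepair_def by auto
  have "card ` Crep D \<Sigma> = {card R}"
  proof
    show "card ` Crep D \<Sigma> \<subseteq> {card R}"
    proof
      fix x assume "x \<in> card ` Crep D \<Sigma>"
      then obtain Y where Y: "is_crepair D \<Sigma> Y" "x = card Y" unfolding Crep_def by auto
      have "card R \<le> card Y" using Y(1) sR unfolding is_crepair_def by auto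
      moreover have "card Y \<le> card R" using Y(1) Rmax unfolding is_crepair_def is_srepair_def A_def by auto
      ultimately show "x \<in> {card R}" using Y by auto
    qed
    show "{card R} \<subseteq> card ` Crep D \<Sigma>" using cR unfolding Crep_def by auto
  qed
  hence m: "Max (card ` Crep D \<Sigma>) = card R" by simp
  have r1: "R \<subseteq> D" "satisfies R \<Sigma>" using R(1) unfolding A_def by auto
  have r2: "\<forall>X. X \<subseteq> D \<and> satisfies X \<Sigma> \<longrightarrow> card X \<le> card R"
  proof (intro allI impI)
    fix X assume "X \<subseteq> D \<and> satisfies X \<Sigma>"
    hence "X \<in> A" unfolding A_def by blast
    thus "card X \<le> card R" using Rmax by blast
  qed
  show ?thesis by (rule that[OF r1 m r2])
qed

lemma minimal_violation:
  assumes "finite S" "violates S \<kappa>"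
  obtains M where "M \<subseteq> S" "violates M \<kappa>" "\<forall>S'. S' \<subset> M \<longrightarrow> \<not> violates S' \<kappa>"
proof -
  define A where "A = {M. M \<subseteq> S \<and> violates M \<kappa>}"
  have fA: "finite A" unfolding A_def using assms(1) by auto
  have neA: "S \<in> A" unfolding A_def using assms by auto
  have "Min (card ` A) \<in> card ` A" using fA neA by (intro Min_in) auto
  then obtain M where M: "M \<in> A" "card M = Min (card ` A)" by auto
  have Mmin: "\<forall>X\<in>A. card M \<le> card X" using M(2) fA by simp
  have MS: "M \<subseteq> S" "violates M \<kappa>" using M(1) unfolding A_def by auto
  have "\<forall>S'. S' \<subset> M \<longrightarrow> \<not> violates S' \<kappa>"
  proof (intro allI impI)
    fix S' assume h: "S' \<subset> M"
    have "finite M" using \<open>M \<subseteq> S\<close> assms(1) finite_subset by auto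
    hence "card S' < card M" using h psubset_card_mono by auto
    show "\<not> violates S' \<kappa>"
    proof
      assume "violates S' \<kappa>"
      hence "S' \<in> A" using h \<open>M \<subseteq> S\<close> unfolding A_def by blast
      hence "card M \<le> card S'" using Mmin by blast
      thus False using \<open>card S' < card M\<close> by simp
    qed
  qed
  thus ?thesis by (rule that[OF MS])
qed

theorem proposition3:
  fixes \<Sigma> :: "'v::linorder dc set" and D Dk :: "'v atom set" and \<epsilon> :: real
  assumes "finite \<Sigma>" and "\<forall>\<kappa>\<in>\<Sigma>. wf_dc \<kappa>"
    and "finite D" and "D \<noteq> {}"
    and "0 < \<epsilon>" and "\<epsilon> < 1"
    and "\<epsilon> * real (card D) \<in> \<int>"
    and "Dk \<subseteq> D" and "real (card Dk) = \<epsilon> * real (card D)"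
  shows "inc_deg_c_g3 (D - Dk) \<Sigma> \<le> 1 / (1 - \<epsilon>) * inc_deg_c_g3 D \<Sigma>
       \<and> inc_deg_c_g3 D \<Sigma> \<le> 1 / (1 - \<epsilon>) * inc_deg_c_g3 (D - Dk) \<Sigma> + \<epsilon>
       \<and> ((\<forall>t\<in>Dk. \<not> participates D \<Sigma> t) \<longrightarrow>
            inc_deg_c_g3 D \<Sigma> \<le> 1 / (1 - \<epsilon>) * inc_deg_c_g3 (D - Dk) \<Sigma>)"
proof -
  have fD': "finite (D - Dk)" using assms(3) by auto
  obtain R where R: "R \<subseteq> D" "satisfies R \<Sigma>" "Max (card ` Crep D \<Sigma>) = card R"
      "\<forall>X. X \<subseteq> D \<and> satisfies X \<Sigma> \<longrightarrow> card X \<le> card R"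
    by (rule crep_max[OF assms(3,2)])
  obtain R' where R': "R' \<subseteq> D - Dk" "satisfies R' \<Sigma>" "Max (card ` Crep (D - Dk) \<Sigma>) = card R'"
      "\<forall>X. X \<subseteq> D - Dk \<and> satisfies X \<Sigma> \<longrightarrow> card X \<le> card R'"
    by (rule crep_max[OF fD' assms(2)])
  define n where "n = real (card D)"
  define k where "k = real (card Dk)"
  define c where "c = real (card R)"
  define c' where "c' = real (card R')"
  have fDk: "finite Dk" using assms(3,8) finite_subset by auto
  have cardD': "real (card (D - Dk)) = n - k"
    unfolding n_def k_def using card_Diff_subset[OF fDk assms(8)] card_mono[OF assms(3,8)] by simp
  have npos: "n > 0" unfolding n_def using assms(3,4) by (simp add: card_gt_0_iff)
  have keps: "k = \<epsilon> * n" using assms(9) unfolding k_def n_def .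
  have "0 < \<epsilon> * n" by (rule mult_pos_pos[OF assms(5) npos])
  hence kpos: "k > 0" using keps by linarith
  have "\<epsilon> * n < 1 * n" by (rule mult_strict_right_mono[OF assms(6) npos])
  hence kn: "k < n" using keps by linarith
  have inc: "inc_deg_c_g3 D \<Sigma> = (n - c) / n"
    unfolding inc_deg_c_g3_def R(3) n_def c_def ..
  have inc': "inc_deg_c_g3 (D - Dk) \<Sigma> = (n - k - c') / (n - k)"
    unfolding inc_deg_c_g3_def R'(3) cardD' c'_def ..
  have e: "1 - \<epsilon> = (n - k) / n" using keps npos by (simp add: field_simps)
  have c1: "c \<le> c' + k"
  proof -
    have s1: "satisfies (R \<inter> (D - Dk)) \<Sigma>" by (rule satisfies_mono[OF R(2)]) blast
    have s2: "R \<inter> (D - Dk) \<subseteq> D - Dk" by blast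
    have a1: "card (R \<inter> (D - Dk)) \<le> card R'" using R'(4) s1 s2 by simp
    have f1: "finite (R \<inter> (D - Dk) \<union> Dk)" using fD' fDk by simp
    have "R \<subseteq> (R \<inter> (D - Dk)) \<union> Dk" using R(1) by blast
    hence "card R \<le> card (R \<inter> (D - Dk) \<union> Dk)" by (rule card_mono[OF f1])
    also have "\<dots> \<le> card (R \<inter> (D - Dk)) + card Dk" by (rule card_Un_le)
    finally have "card R \<le> card (R \<inter> (D - Dk)) + card Dk" .
    thus ?thesis using a1 unfolding c_def c'_def k_def by linarith
  qed
  have c2: "c' \<le> c" using R(4) R'(1,2) unfolding c_def c'_def by auto
  have c'le: "c' \<le> n - k"
    using card_mono[OF fD' R'(1)] cardD' unfolding c'_def by linarith
  have p1: "inc_deg_c_g3 (D - Dk) \<Sigma> \<le> 1 / (1 - \<epsilon>) * inc_deg_c_g3 D \<Sigma>"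
  proof -
    have "1 / (1 - \<epsilon>) * inc_deg_c_g3 D \<Sigma> = (n - c) / (n - k)"
      using npos kn unfolding inc e by (simp add: field_simps)
    moreover have "(n - k - c') / (n - k) \<le> (n - c) / (n - k)"
      using kn c1 by (intro divide_right_mono) auto
    ultimately show ?thesis unfolding inc' by simp
  qed
  have rhs: "1 / (1 - \<epsilon>) * inc_deg_c_g3 (D - Dk) \<Sigma> = n * (n - k - c') / ((n - k) * (n - k))"
    using npos kn unfolding inc' e by (simp add: field_simps)
  have key: "(n - k - c') / n \<le> n * (n - k - c') / ((n - k) * (n - k))"
  proof -
    have mm: "(n - k) * (n - k) \<le> n * n" using kn kpos by (intro mult_mono) auto
    have a0: "0 \<le> n - k - c'" using c'le by simp
    have "(n - k - c') / n = ((n - k - c') * n) / (n * n)" using npos by simp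
    also have "\<dots> \<le> (n * (n - k - c')) / ((n - k) * (n - k))"
      by (rule frac_le) (use a0 npos kn mm in auto)
    finally show ?thesis .
  qed
  have p2: "inc_deg_c_g3 D \<Sigma> \<le> 1 / (1 - \<epsilon>) * inc_deg_c_g3 (D - Dk) \<Sigma> + \<epsilon>"
  proof -
    have "(n - c) / n \<le> (n - k - c') / n + k / n"
      using c2 npos by (simp add: field_simps)
    also have "k / n = \<epsilon>" using keps npos by simp
    finally show ?thesis unfolding inc rhs using key by linarith
  qed
  have p3: "inc_deg_c_g3 D \<Sigma> \<le> 1 / (1 - \<epsilon>) * inc_deg_c_g3 (D - Dk) \<Sigma>"
    if np: "\<forall>t\<in>Dk. \<not> participates D \<Sigma> t"
  proof -
    have sat: "satisfies (R' \<union> Dk) \<Sigma>"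
      unfolding satisfies_def
    proof
      fix \<kappa> assume k\<Sigma>: "\<kappa> \<in> \<Sigma>"
      show "\<not> violates (R' \<union> Dk) \<kappa>"
      proof
        assume v: "violates (R' \<union> Dk) \<kappa>"
        have "R' \<union> Dk \<subseteq> D" using R'(1) assms(8) by blast
        hence fin: "finite (R' \<union> Dk)" using assms(3) by (rule finite_subset)
        obtain M where M: "M \<subseteq> R' \<union> Dk" "violates M \<kappa>"
          "\<forall>S'. S' \<subset> M \<longrightarrow> \<not> violates S' \<kappa>"
          by (rule minimal_violation[OF fin v])
        show False
        proof (cases "M \<inter> Dk = {}")
          case True
          hence "M \<subseteq> R'" using M(1) by blast
          hence "violates R' \<kappa>" by (rule violates_mono[OF M(2)])
          thus False using R'(2) k\<Sigma> unfolding satisfies_def by blast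
        next
          case False
          then obtain t where t: "t \<in> M" "t \<in> Dk" by blast
          have "M \<subseteq> D" using M(1) R'(1) assms(8) by blast
          hence "participates D \<Sigma> t" unfolding participates_def using k\<Sigma> t(1) M(2,3) by blast
          thus False using np t by blast
        qed
      qed
    qed
    have "R' \<union> Dk \<subseteq> D" using R'(1) assms(8) by blast
    hence "card (R' \<union> Dk) \<le> card R" using R(4) sat by blast
    moreover have "card (R' \<union> Dk) = card R' + card Dk"
      using R'(1) fDk fD' finite_subset by (intro card_Un_disjoint) auto
    ultimately have "c' + k \<le> c" unfolding c_def c'_def k_def by linarith
    hence "(n - c) / n \<le> (n - k - c') / n" using npos by (intro divide_right_mono) auto
    thus ?thesis unfolding inc rhs using key by linarith
  qed
  show ?thesis using p1 p2 p3 by blast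
qed

end
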